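(* Let $n\ge 2$ and $w\in S_n$, and let $P=[C_1,\dots,C_k]$ be a path in the conflated expression graph $\Gamma_w$. If $\tilde p$ and $\tilde p'$ are two lifts of $P$ to $Rex(w)$, then $f(\tilde p)=f(\tilde p')$. In other words, the path morphism $f(P):=f(\tilde p)$ of a path in $\Gamma_w$ is well defined.
   Context: $S_n$ is the symmetric group with simple reflections $s_i=(i\ i+1)$, $1\le i\le n-1$; in words we write $i$ for $s_i$. A reduced expression of $w$ is a word $i_1\cdots i_k$ with $w=s_{i_1}\cdots s_{i_k}$ and $k$ minimal. The rex graph $Rex(w)$ has as vertices the reduced expressions of $w$, with an edge between two reduced expressions that differ by a single braid relation applied to consecutive letters: either $i(i+1)i\leftrightarrow (i+1)i(i+1)$ (an adjacent edge) or $ij\leftrightarrow ji$ with $|i-j|\ge 2$ (a distant edge). Let $R=\mathbb{R}[x_1,\dots,x_n]$, graded with $\deg x_i=2$, with $s_i$ acting by swapping $x_i$ and $x_{i+1}$; $R^{s}$ denotes the $s$-invariants, $B_i=R\otimes_{R^{s_i}}R(1)$, and for a word $i_1\cdots i_k$ the Bott–Samelson bimodule is $B_{i_1}\otimes_R\cdots\otimes_R B_{i_k}$. For $i\ne j$ let $m_{ij}\in\{2,3\}$ be the order of $s_is_j$ and let $f_{ij}:B_iB_jB_i\cdots\to B_jB_iB_j\cdots$ (each with $m_{ij}$ factors) be the unique degree-$0$ $R$-bimodule morphism sending $1\otimes\cdots\otimes 1$ to $1\otimes\cdots\otimes1$. Traversing an edge from $\underline u$ to $\underline v$, where $\underline v$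 is obtained from $\underline u$ by replacing a consecutive subword $iji\cdots$ ($m_{ij}$ letters) by $jij\cdots$, gives the morphism $\mathrm{Id}\otimes f_{ij}\otimes\mathrm{Id}:B_{\underline u}\to B_{\underline v}$. For a path $p$ (a sequence of vertices, consecutive ones joined by an edge) the path morphism $f(p)$ is the composite of the edge morphisms along $p$ (the identity for a one-vertex path). A cloud is an equivalence class of vertices of $Rex(w)$ under the equivalence relation generated by distant edges. The conflated expression graph $\Gamma_w$ has the clouds as vertices, with an edge between two distinct clouds whenever some adjacent edge of $Rex(w)$ joins an element of one to an element of the other; for each such pair of clouds one adjacent edge joining them is fixed (the representative edge), and each cloud $C$ has a fixed representative element $\mathrm{rep}(C)$ (by convention the lexicographically smallest). A lift of a path $P=[C_1,\dots,C_k]$ in $\Gamma_w$ is a path in $Rex(w)$ that starts at $\mathrm{rep}(C_1)$, ends at $\mathrm{rep}(C_k)$, whose adjacent edges are, in order, the representative edges for $\{C_1,C_2\},\dots,\{C_{k-1},C_k\}$, and all of whose other edges are distant edges. *)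

theory Defs
  imports Complex_Main "HOL-Combinatorics.Permutations" "HOL-Combinatorics.Transposition"
begin

type_synonym word = "nat list"

definition sref :: "nat \<Rightarrow> nat \<Rightarrow> nat" where
  "sref i = transpose i (Suc i)"

definition prod_word :: "word \<Rightarrow> (nat \<Rightarrow> nat)" where
  "prod_word u = foldr (\<lambda>i f. sref i \<circ> f) u id"

definition is_word :: "nat \<Rightarrow> word \<Rightarrow> bool" where
  "is_word n u \<longleftrightarrow> set u \<subseteq> {1..<n}"

definition reduced :: "nat \<Rightarrow> (nat \<Rightarrow> nat) \<Rightarrow> word \<Rightarrow> bool" where
  "reduced n w u \<longleftrightarrow> is_word n u \<and> prod_word u = w \<and>
     (\<forall>u'. is_word n u' \<and> prod_word u' = w \<longrightarrow> length u \<le> length u')"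

definition Rex :: "nat \<Rightarrow> (nat \<Rightarrow> nat) \<Rightarrow> word set" where
  "Rex n w = {u. reduced n w u}"

definition mord :: "nat \<Rightarrow> nat \<Rightarrow> nat" where
  "mord i j = (if i + 2 \<le> j \<or> j + 2 \<le> i then 2 else 3)"

definition bword :: "nat \<Rightarrow> nat \<Rightarrow> nat \<Rightarrow> word" where
  "bword i j m = map (\<lambda>t. if even t then i else j) [0..<m]"

definition braid_move :: "nat \<Rightarrow> word \<Rightarrow> word \<Rightarrow> bool" where
  "braid_move m u v \<longleftrightarrow> (\<exists>a b i j. i \<noteq> j \<and> mord i j = m \<and>
      u = a @ bword i j m @ b \<and> v = a @ bword j i m @ b)"

definition adjacent_edge :: "nat \<Rightarrow> (nat \<Rightarrow> nat) \<Rightarrow> word \<Rightarrow> word \<Rightarrow> bool" where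
  "adjacent_edge n w u v \<longleftrightarrow> u \<in> Rex n w \<and> v \<in> Rex n w \<and> braid_move 3 u v"

definition distant_edge :: "nat \<Rightarrow> (nat \<Rightarrow> nat) \<Rightarrow> word \<Rightarrow> word \<Rightarrow> bool" where
  "distant_edge n w u v \<longleftrightarrow> u \<in> Rex n w \<and> v \<in> Rex n w \<and> braid_move 2 u v"

definition rex_edge :: "nat \<Rightarrow> (nat \<Rightarrow> nat) \<Rightarrow> word \<Rightarrow> word \<Rightarrow> bool" where
  "rex_edge n w u v \<longleftrightarrow> adjacent_edge n w u v \<or> distant_edge n w u v"

definition rex_path :: "nat \<Rightarrow> (nat \<Rightarrow> nat) \<Rightarrow> word list \<Rightarrow> bool" where
  "rex_path n w ps \<longleftrightarrow> ps \<noteq> [] \<and> set ps \<subseteq> Rex n w \<and>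
     (\<forall>k. Suc k < length ps \<longrightarrow> rex_edge n w (ps ! k) (ps ! Suc k))"

definition cloud :: "nat \<Rightarrow> (nat \<Rightarrow> nat) \<Rightarrow> word \<Rightarrow> word set" where
  "cloud n w u = {v. (equivclp (distant_edge n w)) u v}"

definition clouds :: "nat \<Rightarrow> (nat \<Rightarrow> nat) \<Rightarrow> word set set" where
  "clouds n w = cloud n w ` Rex n w"

definition gamma_edge :: "nat \<Rightarrow> (nat \<Rightarrow> nat) \<Rightarrow> word set \<Rightarrow> word set \<Rightarrow> bool" where
  "gamma_edge n w C D \<longleftrightarrow> C \<in> clouds n w \<and> D \<in> clouds n w \<and> C \<noteq> D \<and>
     (\<exists>u\<in>C. \<exists>v\<in>D. adjacent_edge n w u v)"

definition gamma_path :: "nat \<Rightarrow> (nat \<Rightarrow> nat) \<Rightarrow> word set list \<Rightarrow> bool" where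
  "gamma_path n w Cs \<longleftrightarrow> Cs \<noteq> [] \<and> set Cs \<subseteq> clouds n w \<and>
     (\<forall>k. Suc k < length Cs \<longrightarrow> gamma_edge n w (Cs ! k) (Cs ! Suc k))"

definition rep :: "word set \<Rightarrow> word" where
  "rep C = (THE u. u \<in> C \<and> (\<forall>v\<in>C. v \<noteq> u \<longrightarrow> (u, v) \<in> lexord {(a, b). a < b}))"

definition rep_edges :: "nat \<Rightarrow> (nat \<Rightarrow> nat) \<Rightarrow> (word set \<Rightarrow> word set \<Rightarrow> word set) \<Rightarrow> bool" where
  "rep_edges n w E \<longleftrightarrow> (\<forall>C D. gamma_edge n w C D \<longrightarrow>
      E C D = E D C \<and> (\<exists>u v. u \<in> C \<and> v \<in> D \<and> adjacent_edge n w u v \<and> E C D = {u, v}))"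

definition lift :: "nat \<Rightarrow> (nat \<Rightarrow> nat) \<Rightarrow> (word set \<Rightarrow> word set \<Rightarrow> word set) \<Rightarrow>
    word set list \<Rightarrow> word list \<Rightarrow> bool" where
  "lift n w E Cs ps \<longleftrightarrow> rex_path n w ps \<and> hd ps = rep (hd Cs) \<and> last ps = rep (last Cs) \<and>
     map (\<lambda>(a, b). {a, b}) (filter (\<lambda>(a, b). adjacent_edge n w a b) (zip ps (tl ps)))
       = map (\<lambda>(C, D). E C D) (zip Cs (tl Cs))"

text \<open>Polynomials over the reals are modelled by polynomial functions (faithful since the
  reals are infinite). Variable (j, a) is the variable x_a in the j-th tensor factor.\<close>

type_synonym pt = "nat \<times> nat \<Rightarrow> real"
type_synonym pf = "pt \<Rightarrow> real"

inductive_set polys :: "(nat \<times> nat) set \<Rightarrow> pf set" for V where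
  pconst: "(\<lambda>_. c) \<in> polys V"
| pvar: "v \<in> V \<Longrightarrow> (\<lambda>x. x v) \<in> polys V"
| padd: "p \<in> polys V \<Longrightarrow> q \<in> polys V \<Longrightarrow> (\<lambda>x. p x + q x) \<in> polys V"
| pmul: "p \<in> polys V \<Longrightarrow> q \<in> polys V \<Longrightarrow> (\<lambda>x. p x * q x) \<in> polys V"

definition slots :: "nat \<Rightarrow> nat \<Rightarrow> (nat \<times> nat) set" where
  "slots n k = {(j, a). j \<le> k \<and> 1 \<le> a \<and> a \<le> n}"

text \<open>the polynomial ring R = real[x_1..x_n], as polynomials in the factor-0 variables\<close>
definition Rpoly :: "nat \<Rightarrow> pf set" where
  "Rpoly n = polys (slots n 0)"

text \<open>R tensor ... tensor R (k+1 factors) over the reals\<close>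
definition Apoly :: "nat \<Rightarrow> nat \<Rightarrow> pf set" where
  "Apoly n k = polys (slots n k)"

definition place :: "nat \<Rightarrow> pf \<Rightarrow> pf" where
  "place j g = (\<lambda>x. g (\<lambda>(i, a). x (j, a)))"

definition shiftp :: "nat \<Rightarrow> pf \<Rightarrow> pf" where
  "shiftp s p = (\<lambda>x. p (\<lambda>(j, a). x (j + s, a)))"

definition sact :: "nat \<Rightarrow> pf \<Rightarrow> pf" where
  "sact i g = (\<lambda>x. g (\<lambda>(j, a). x (j, sref i a)))"

inductive_set gen_ideal :: "(nat \<times> nat) set \<Rightarrow> pf set \<Rightarrow> pf set" for V G where
  igen: "g \<in> G \<Longrightarrow> g \<in> gen_ideal V G"
| izero: "(\<lambda>_. 0) \<in> gen_ideal V G"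
| iadd: "p \<in> gen_ideal V G \<Longrightarrow> q \<in> gen_ideal V G \<Longrightarrow> (\<lambda>x. p x + q x) \<in> gen_ideal V G"
| imul: "r \<in> polys V \<Longrightarrow> p \<in> gen_ideal V G \<Longrightarrow> (\<lambda>x. r x * p x) \<in> gen_ideal V G"

text \<open>B_u = R tensor_{R^{s_{u_1}}} R tensor ... tensor_{R^{s_{u_k}}} R is Apoly n k modulo
  the ideal generated by g(factor j-1) - g(factor j), g invariant under s_{u_j}\<close>
definition BSideal :: "nat \<Rightarrow> word \<Rightarrow> pf set" where
  "BSideal n u = gen_ideal (slots n (length u))
     {(\<lambda>x. place (j - 1) g x - place j g x) | j g.
        1 \<le> j \<and> j \<le> length u \<and> g \<in> Rpoly n \<and> sact (u ! (j - 1)) g = g}"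

text \<open>equality in B_u of the classes of p and q\<close>
definition modeq :: "nat \<Rightarrow> word \<Rightarrow> pf \<Rightarrow> pf \<Rightarrow> bool" where
  "modeq n u p q \<longleftrightarrow> (\<lambda>x. p x - q x) \<in> BSideal n u"

definition homog :: "nat \<Rightarrow> pf \<Rightarrow> bool" where
  "homog d p \<longleftrightarrow> (\<forall>t x. p (\<lambda>v. t * x v) = t ^ d * p x)"

text \<open>F (acting on representatives) induces an R-bimodule morphism B_u \<rightarrow> B_v\<close>
definition bimor :: "nat \<Rightarrow> word \<Rightarrow> word \<Rightarrow> (pf \<Rightarrow> pf) \<Rightarrow> bool" where
  "bimor n u v F \<longleftrightarrow>
     (\<forall>p\<in>Apoly n (length u). F p \<in> Apoly n (length v)) \<and>
     (\<forall>p\<in>Apoly n (length u). \<forall>q\<in>Apoly n (length u). modeq n u p q \<longrightarrow> modeq n v (F p) (F q)) \<and>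
     (\<forall>p\<in>Apoly n (length u). \<forall>q\<in>Apoly n (length u).
         modeq n v (F (\<lambda>x. p x + q x)) (\<lambda>x. F p x + F q x)) \<and>
     (\<forall>g\<in>Rpoly n. \<forall>p\<in>Apoly n (length u).
         modeq n v (F (\<lambda>x. place 0 g x * p x)) (\<lambda>x. place 0 g x * F p x)) \<and>
     (\<forall>g\<in>Rpoly n. \<forall>p\<in>Apoly n (length u).
         modeq n v (F (\<lambda>x. place (length u) g x * p x)) (\<lambda>x. place (length v) g x * F p x))"

text \<open>degree 0 (for words of equal length, where the grading shifts agree):
  homogeneous elements of degree d are sent to homogeneous elements of degree d\<close>
definition deg0 :: "nat \<Rightarrow> word \<Rightarrow> word \<Rightarrow> (pf \<Rightarrow> pf) \<Rightarrow> bool" where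
  "deg0 n u v F \<longleftrightarrow> (\<forall>d. \<forall>p\<in>Apoly n (length u). homog d p \<longrightarrow>
      (\<exists>q\<in>Apoly n (length v). homog d q \<and> modeq n v (F p) q))"

text \<open>f is (a representative of) the morphism f_{ij}: B_i B_j B_i ... \<rightarrow> B_j B_i B_j ...,
  the degree-0 bimodule morphism sending 1 \<otimes> ... \<otimes> 1 to 1 \<otimes> ... \<otimes> 1\<close>
definition is_fij :: "nat \<Rightarrow> nat \<Rightarrow> nat \<Rightarrow> (pf \<Rightarrow> pf) \<Rightarrow> bool" where
  "is_fij n i j f \<longleftrightarrow>
     (let u = bword i j (mord i j); v = bword j i (mord i j) in
        bimor n u v f \<and> deg0 n u v f \<and> modeq n v (f (\<lambda>_. 1)) (\<lambda>_. 1))"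

text \<open>F is (a representative of) Id \<otimes> f_{ij} \<otimes> Id : B_u \<rightarrow> B_v where
  u = a @ (i j i ...) @ b and v = a @ (j i j ...) @ b: a bimodule morphism which is linear
  over the outer tensor factors (those of B_a and B_b) and agrees with f_{ij} on the
  middle tensor factors.\<close>
definition edge_mor :: "nat \<Rightarrow> word \<Rightarrow> word \<Rightarrow> (pf \<Rightarrow> pf) \<Rightarrow> bool" where
  "edge_mor n u v F \<longleftrightarrow> (\<exists>a b i j. i \<noteq> j \<and>
     u = a @ bword i j (mord i j) @ b \<and> v = a @ bword j i (mord i j) @ b \<and>
     bimor n u v F \<and>
     (\<forall>g\<in>polys {(s, c) \<in> slots n (length u). s \<le> length a \<or> length a + mord i j \<le> s}.
        \<forall>p\<in>Apoly n (length u). modeq n v (F (\<lambda>x. g x * p x)) (\<lambda>x. g x * F p x)) \<and>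
     (\<exists>f. is_fij n i j f \<and>
        (\<forall>p\<in>Apoly n (mord i j). modeq n v (F (shiftp (length a) p)) (shiftp (length a) (f p)))))"

fun path_mor :: "(word \<Rightarrow> word \<Rightarrow> (pf \<Rightarrow> pf)) \<Rightarrow> word list \<Rightarrow> (pf \<Rightarrow> pf)" where
  "path_mor Fm [] = id"
| "path_mor Fm [u] = id"
| "path_mor Fm (u # v # ps) = path_mor Fm (v # ps) \<circ> Fm u v"

end

theory Submission
  imports Defs
begin

definition sb :: "(nat \<times> nat \<Rightarrow> nat) \<Rightarrow> pt \<Rightarrow> pt" where
  "sb \<tau> x = (\<lambda>v. x (\<tau> v, snd v))"

definition cnt :: "word \<Rightarrow> nat \<Rightarrow> nat \<Rightarrow> nat" where
  "cnt z t c = length (filter (\<lambda>i. i = c \<or> Suc i = c) (take t z))"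

lemma polys_subst:
  assumes "q \<in> polys V" "\<forall>v\<in>V. (\<tau> v, snd v) \<in> W"
  shows "(\<lambda>x. q (sb \<tau> x)) \<in> polys W"
  using assms
proof (induction rule: polys.induct)
  case (pconst c) then show ?case by (simp add: polys.pconst)
next
  case (pvar v) then show ?case by (simp add: sb_def polys.pvar)
next
  case (padd p q) then show ?case using polys.padd by fastforce
next
  case (pmul p q) then show ?case using polys.pmul by fastforce
qed

lemma polys_mono:
  assumes "q \<in> polys V" "V \<subseteq> W" shows "q \<in> polys W"
  using assms by (induction rule: polys.induct) (auto intro: polys.intros)

lemma gi_neg: "p \<in> gen_ideal V G \<Longrightarrow> (\<lambda>x. - p x) \<in> gen_ideal V G"
  using gen_ideal.imul[of "\<lambda>_. -1" V p G] polys.pconst[of "-1" V] by simp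

lemma modeq_refl: "modeq n z p p"
  unfolding modeq_def BSideal_def using gen_ideal.izero by simp

lemma modeq_sym: "modeq n z p q \<Longrightarrow> modeq n z q p"
  unfolding modeq_def BSideal_def by (drule gi_neg) simp

lemma modeq_trans: "modeq n z p q \<Longrightarrow> modeq n z q r \<Longrightarrow> modeq n z p r"
  unfolding modeq_def BSideal_def by (drule (1) gen_ideal.iadd) simp

lemma modeq_mul: "r \<in> polys (slots n (length z)) \<Longrightarrow> modeq n z p q \<Longrightarrow>
   modeq n z (\<lambda>x. r x * p x) (\<lambda>x. r x * q x)"
  unfolding modeq_def BSideal_def by (drule (1) gen_ideal.imul) (simp add: right_diff_distrib)

lemma modeq_add: "modeq n z p q \<Longrightarrow> modeq n z p' q' \<Longrightarrow>
   modeq n z (\<lambda>x. p x + p' x) (\<lambda>x. q x + q' x)"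
  unfolding modeq_def BSideal_def by (drule (1) gen_ideal.iadd) (simp add: algebra_simps)

lemma cnt_Suc: "t < length z \<Longrightarrow>
  cnt z (Suc t) c = cnt z t c + (if z ! t = c \<or> Suc (z ! t) = c then 1 else 0)"
  by (simp add: cnt_def take_Suc_conv_app_nth)

lemma cnt_mono: "a \<le> b \<Longrightarrow> cnt z a c \<le> cnt z b c"
proof -
  assume "a \<le> b"
  then obtain d where "b = a + d" using le_Suc_ex by blast
  then show ?thesis by (simp add: cnt_def take_add)
qed

lemma var_step:
  assumes "t < length z" "\<not> (z ! t = c \<or> Suc (z ! t) = c)" "1 \<le> c" "c \<le> n"
  shows "(\<lambda>x. x (t, c) - x (Suc t, c)) \<in> BSideal n z"
proof -
  let ?g = "\<lambda>y::pt. y (0, c)"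
  have g: "?g \<in> Rpoly n" unfolding Rpoly_def
    using assms by (intro polys.pvar) (simp add: slots_def)
  have s: "sact (z ! (Suc t - 1)) ?g = ?g"
    using assms(2) by (simp add: sact_def sref_def)
  have e: "(\<lambda>x. x (t, c) - x (Suc t, c)) = (\<lambda>x. place (Suc t - 1) ?g x - place (Suc t) ?g x)"
    by (simp add: place_def)
  show ?thesis unfolding BSideal_def e
    apply (rule gen_ideal.igen)
    apply (rule CollectI)
    apply (rule exI[of _ "Suc t"], rule exI[of _ ?g])
    using g s assms(1) by simp
qed

lemma var_cong_le:
  assumes "t1 \<le> t2" "t2 \<le> length z" "cnt z t1 c = cnt z t2 c" "1 \<le> c" "c \<le> n"
  shows "(\<lambda>x. x (t1, c) - x (t2, c)) \<in> BSideal n z"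
  using assms
proof (induction t2 rule: dec_induct)
  case base
  then show ?case unfolding BSideal_def using gen_ideal.izero by simp
next
  case (step m)
  have "cnt z t1 c \<le> cnt z m c" using step cnt_mono by blast
  moreover have "cnt z m c \<le> cnt z (Suc m) c" using cnt_mono by simp
  ultimately have eq: "cnt z m c = cnt z (Suc m) c" using step by simp
  then have na: "\<not> (z ! m = c \<or> Suc (z ! m) = c)" using cnt_Suc[of m z c] step by auto
  have 1: "(\<lambda>x. x (t1, c) - x (m, c)) \<in> BSideal n z" using step eq by simp
  have 2: "(\<lambda>x. x (m, c) - x (Suc m, c)) \<in> BSideal n z" using var_step[OF _ na] step by simp
  show ?case using gen_ideal.iadd[OF 1[unfolded BSideal_def] 2[unfolded BSideal_def]]
    unfolding BSideal_def by simp
qed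

lemma var_cong:
  assumes "t1 \<le> length z" "t2 \<le> length z" "cnt z t1 c = cnt z t2 c" "1 \<le> c" "c \<le> n"
  shows "(\<lambda>x. x (t1, c) - x (t2, c)) \<in> BSideal n z"
proof (cases "t1 \<le> t2")
  case True then show ?thesis using var_cong_le assms by blast
next
  case False
  then have "(\<lambda>x. x (t2, c) - x (t1, c)) \<in> BSideal n z" using var_cong_le assms by simp
  from gi_neg[OF this[unfolded BSideal_def]] show ?thesis unfolding BSideal_def by simp
qed

lemma subst_cong:
  assumes "q \<in> polys V"
    "\<forall>v\<in>V. \<tau>1 v \<le> length z \<and> \<tau>2 v \<le> length z \<and> 1 \<le> snd v \<and> snd v \<le> n \<and>
        cnt z (\<tau>1 v) (snd v) = cnt z (\<tau>2 v) (snd v)"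
  shows "(\<lambda>x. q (sb \<tau>1 x) - q (sb \<tau>2 x)) \<in> BSideal n z"
  using assms
proof (induction rule: polys.induct)
  case (pconst c)
  then show ?case unfolding BSideal_def using gen_ideal.izero by simp
next
  case (pvar v)
  then show ?case using var_cong[of "\<tau>1 v" z "\<tau>2 v" "snd v" n] by (simp add: sb_def)
next
  case (padd p q)
  then show ?case using gen_ideal.iadd[of "\<lambda>x. p (sb \<tau>1 x) - p (sb \<tau>2 x)" _ _ "\<lambda>x. q (sb \<tau>1 x) - q (sb \<tau>2 x)"]
    unfolding BSideal_def by (simp add: algebra_simps)
next
  case (pmul p q)
  have W: "\<forall>v\<in>V. (\<tau>1 v, snd v) \<in> slots n (length z)" "\<forall>v\<in>V. (\<tau>2 v, snd v) \<in> slots n (length z)"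
    using pmul.prems by (auto simp: slots_def)
  have p1: "(\<lambda>x. p (sb \<tau>1 x)) \<in> polys (slots n (length z))" using polys_subst pmul W by blast
  have q2: "(\<lambda>x. q (sb \<tau>2 x)) \<in> polys (slots n (length z))" using polys_subst pmul W by blast
  have a: "(\<lambda>x. p (sb \<tau>1 x) * (q (sb \<tau>1 x) - q (sb \<tau>2 x))) \<in> BSideal n z"
    using gen_ideal.imul[OF p1 pmul.IH(2)[OF pmul.prems, unfolded BSideal_def]] unfolding BSideal_def by simp
  have b: "(\<lambda>x. q (sb \<tau>2 x) * (p (sb \<tau>1 x) - p (sb \<tau>2 x))) \<in> BSideal n z"
    using gen_ideal.imul[OF q2 pmul.IH(1)[OF pmul.prems, unfolded BSideal_def]] unfolding BSideal_def by simp
  show ?case using gen_ideal.iadd[OF a[unfolded BSideal_def] b[unfolded BSideal_def]]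
    unfolding BSideal_def by (simp add: algebra_simps)
qed


definition valid :: "nat \<Rightarrow> word \<Rightarrow> word \<Rightarrow> (nat \<times> nat \<Rightarrow> nat) \<Rightarrow> bool" where
  "valid n u v \<tau> \<longleftrightarrow> (\<forall>s c. s \<le> length u \<and> 1 \<le> c \<and> c \<le> n \<longrightarrow>
      \<tau> (s, c) \<le> length v \<and> cnt v (\<tau> (s, c)) c = cnt u s c)"

definition good :: "nat \<Rightarrow> word \<Rightarrow> word \<Rightarrow> (pf \<Rightarrow> pf) \<Rightarrow> bool" where
  "good n u v G \<longleftrightarrow> (\<forall>q\<in>Apoly n (length u). G q \<in> Apoly n (length v)) \<and>
     (\<forall>p\<in>Apoly n (length u). \<forall>q\<in>Apoly n (length u). modeq n u p q \<longrightarrow> modeq n v (G p) (G q)) \<and>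
     (\<forall>q\<in>Apoly n (length u). \<exists>\<tau>. valid n u v \<tau> \<and> modeq n v (G q) (\<lambda>x. q (sb \<tau> x)))"

lemma sb_fst: "sb fst x = x"
  by (auto simp: sb_def)

lemma good_id: "good n u u id"
  unfolding good_def
proof (intro conjI ballI impI)
  fix q assume "q \<in> Apoly n (length u)"
  show "\<exists>\<tau>. valid n u u \<tau> \<and> modeq n u (id q) (\<lambda>x. q (sb \<tau> x))"
    by (rule exI[of _ fst]) (simp add: valid_def sb_fst modeq_refl)
qed auto

lemma valid_subst_apoly:
  assumes "valid n u v \<tau>" "q \<in> Apoly n (length u)"
  shows "(\<lambda>x. q (sb \<tau> x)) \<in> Apoly n (length v)"
  using assms unfolding Apoly_def
  by (intro polys_subst[of q]) (auto simp: valid_def slots_def)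

lemma good_comp:
  assumes F: "good n u v F" and G: "good n v w G"
  shows "good n u w (G \<circ> F)"
  unfolding good_def
proof (intro conjI ballI impI)
  fix q assume q: "q \<in> Apoly n (length u)"
  then show "(G \<circ> F) q \<in> Apoly n (length w)" using F G unfolding good_def by simp
next
  fix p q assume "p \<in> Apoly n (length u)" "q \<in> Apoly n (length u)" "modeq n u p q"
  then show "modeq n w ((G \<circ> F) p) ((G \<circ> F) q)" using F G unfolding good_def by simp
next
  fix q assume q: "q \<in> Apoly n (length u)"
  obtain \<tau> where t: "valid n u v \<tau>" "modeq n v (F q) (\<lambda>x. q (sb \<tau> x))"
    using F q unfolding good_def by blast
  have Fq: "F q \<in> Apoly n (length v)" using F q unfolding good_def by blast
  have qt: "(\<lambda>x. q (sb \<tau> x)) \<in> Apoly n (length v)" using valid_subst_apoly t q by blast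
  obtain \<tau>' where t': "valid n v w \<tau>'" "modeq n w (G (\<lambda>x. q (sb \<tau> x))) (\<lambda>x. q (sb \<tau> (sb \<tau>' x)))"
    using G qt unfolding good_def by blast
  have 1: "modeq n w (G (F q)) (G (\<lambda>x. q (sb \<tau> x)))" using G Fq qt t unfolding good_def by blast
  have e: "(\<lambda>x. q (sb \<tau> (sb \<tau>' x))) = (\<lambda>x. q (sb (\<lambda>v. \<tau>' (\<tau> v, snd v)) x))"
    by (simp add: sb_def)
  have v: "valid n u w (\<lambda>v. \<tau>' (\<tau> v, snd v))"
    using t(1) t'(1) unfolding valid_def by simp
  show "\<exists>\<tau>. valid n u w \<tau> \<and> modeq n w ((G \<circ> F) q) (\<lambda>x. q (sb \<tau> x))"
    using v modeq_trans[OF 1 t'(2)] e by auto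
qed

lemma good_agree:
  assumes "good n u v G1" "good n u v G2" "q \<in> Apoly n (length u)"
  shows "modeq n v (G1 q) (G2 q)"
proof -
  obtain \<tau>1 where t1: "valid n u v \<tau>1" "modeq n v (G1 q) (\<lambda>x. q (sb \<tau>1 x))"
    using assms unfolding good_def by blast
  obtain \<tau>2 where t2: "valid n u v \<tau>2" "modeq n v (G2 q) (\<lambda>x. q (sb \<tau>2 x))"
    using assms unfolding good_def by blast
  have "(\<lambda>x. q (sb \<tau>1 x) - q (sb \<tau>2 x)) \<in> BSideal n v"
    apply (rule subst_cong[of q "slots n (length u)"])
    using assms(3) t1(1) t2(1) unfolding Apoly_def valid_def slots_def by auto
  then have "modeq n v (\<lambda>x. q (sb \<tau>1 x)) (\<lambda>x. q (sb \<tau>2 x))" unfolding modeq_def .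
  then show ?thesis using t1(2) t2(2) modeq_trans modeq_sym by blast
qed


definition occ :: "nat \<Rightarrow> word \<Rightarrow> nat" where
  "occ c u = length (filter ((=) c) u)"

lemma bword2: "bword i j 2 = [i, j]"
  by (simp add: bword_def numeral_2_eq_2)

lemma bword3: "bword i j 3 = [i, j, i]"
  by (simp add: bword_def numeral_3_eq_3)

lemma mord_cases: "mord i j = 2 \<or> mord i j = 3"
  by (simp add: mord_def)

lemma occ_distant: "braid_move 2 u v \<Longrightarrow> occ c u = occ c v"
  by (auto simp: braid_move_def bword2 occ_def)

lemma occ_adjacent: "braid_move 3 u v \<Longrightarrow> \<exists>c. occ c u \<noteq> occ c v"
proof -
  assume "braid_move 3 u v"
  then obtain a b i j where "i \<noteq> j" "u = a @ [i, j, i] @ b" "v = a @ [j, i, j] @ b"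
    unfolding braid_move_def bword3 by blast
  then have "occ i u \<noteq> occ i v" by (simp add: occ_def)
  then show ?thesis by blast
qed

lemma cnt_append: "cnt (xs @ ys) t c = cnt xs t c + cnt ys (t - length xs) c"
  by (simp add: cnt_def take_append)

lemma cnt_l0: "cnt (a @ x # y # b) (length a) c = cnt a (length a) c"
  by (simp add: cnt_append cnt_def)

lemma cnt_l1: "cnt (a @ x # y # b) (Suc (length a)) c =
   cnt a (length a) c + (if x = c \<or> Suc x = c then 1 else 0)"
  by (simp add: cnt_append cnt_def)

lemma cnt_l2: "cnt (a @ x # y # b) (Suc (Suc (length a))) c =
   cnt a (length a) c + (if x = c \<or> Suc x = c then 1 else 0) + (if y = c \<or> Suc y = c then 1 else 0)"
  by (simp add: cnt_append cnt_def)

lemma shiftp_sb: "shiftp l p = (\<lambda>x. p (sb (\<lambda>v. fst v + l) x))"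
  by (simp add: shiftp_def sb_def case_prod_beta')

lemma shift_ideal:
  assumes "p \<in> BSideal n z"
  shows "shiftp (length a) p \<in> BSideal n (a @ z @ b)"
proof -
  let ?l = "length a"
  have W: "\<forall>v\<in>slots n (length z). (fst v + ?l, snd v) \<in> slots n (length (a @ z @ b))"
    by (auto simp: slots_def)
  have "p \<in> gen_ideal (slots n (length z))
     {(\<lambda>x. place (j - 1) g x - place j g x) | j g.
        1 \<le> j \<and> j \<le> length z \<and> g \<in> Rpoly n \<and> sact (z ! (j - 1)) g = g}"
    using assms unfolding BSideal_def .
  then show ?thesis
  proof (induction rule: gen_ideal.induct)
    case (igen g0)
    then obtain j g where jg: "g0 = (\<lambda>x. place (j - 1) g x - place j g x)" "1 \<le> j" "j \<le> length z"
      "g \<in> Rpoly n" "sact (z ! (j - 1)) g = g" by blast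
    have e: "shiftp ?l g0 = (\<lambda>x. place (j + ?l - 1) g x - place (j + ?l) g x)"
      using jg(1,2) by (simp add: shiftp_def place_def case_prod_beta' add.commute)
    have "j + ?l - 1 = ?l + (j - 1)" using jg(2) by simp
    then have "(a @ z @ b) ! (j + ?l - 1) = (z @ b) ! (j - 1)"
      by (simp only: nth_append_length_plus)
    also have "\<dots> = z ! (j - 1)"
    proof -
      have "j - 1 < length z" using jg(2,3) by simp
      then show ?thesis by (simp only: nth_append if_True)
    qed
    finally have nth: "(a @ z @ b) ! (j + ?l - 1) = z ! (j - 1)" .
    show ?case unfolding BSideal_def e
      apply (rule gen_ideal.igen, rule CollectI)
      apply (rule exI[of _ "j + ?l"], rule exI[of _ g])
      using jg nth by simp
  next
    case izero
    then show ?case unfolding BSideal_def shiftp_def using gen_ideal.izero by simp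
  next
    case (iadd p q)
    then show ?case unfolding BSideal_def shiftp_def using gen_ideal.iadd by fastforce
  next
    case (imul r p)
    have "shiftp ?l r \<in> polys (slots n (length (a @ z @ b)))"
      unfolding shiftp_sb using polys_subst[OF imul.hyps(1) W] .
    then show ?case using gen_ideal.imul[OF _ imul.IH[unfolded BSideal_def]]
      unfolding BSideal_def by (simp add: shiftp_def)
  qed
qed

lemma distant_good:
  assumes de: "distant_edge n w u v" and em: "edge_mor n u v F"
  shows "good n u v F"
proof -
  obtain a b i j f where ij: "i \<noteq> j"
    and u: "u = a @ bword i j (mord i j) @ b" and v: "v = a @ bword j i (mord i j) @ b"
    and bm: "bimor n u v F"
    and lin: "\<forall>g\<in>polys {(s, c) \<in> slots n (length u). s \<le> length a \<or> length a + mord i j \<le> s}.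
        \<forall>p\<in>Apoly n (length u). modeq n v (F (\<lambda>x. g x * p x)) (\<lambda>x. g x * F p x)"
    and fij: "is_fij n i j f"
    and sh: "\<forall>p\<in>Apoly n (mord i j). modeq n v (F (shiftp (length a) p)) (shiftp (length a) (f p))"
    using em unfolding edge_mor_def by blast
  have bmv: "braid_move 2 u v" using de unfolding distant_edge_def by simp
  have m2: "mord i j = 2"
  proof (rule ccontr)
    assume "mord i j \<noteq> 2"
    then have "mord i j = 3" using mord_cases by blast
    then have "u = a @ [i, j, i] @ b" "v = a @ [j, i, j] @ b" using u v bword3 by auto
    then have "occ i u \<noteq> occ i v" using ij by (simp add: occ_def)
    then show False using occ_distant[OF bmv] by blast
  qed
  have far: "i + 2 \<le> j \<or> j + 2 \<le> i" using m2 unfolding mord_def by (auto split: if_splits)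
  let ?l = "length a"
  have u2: "u = a @ [i, j] @ b" and v2: "v = a @ [j, i] @ b" using u v m2 bword2 by auto
  have lu: "length u = ?l + 2 + length b" and lv: "length v = ?l + 2 + length b"
    using u2 v2 by auto
  have f1: "modeq n [j, i] (f (\<lambda>_. 1)) (\<lambda>_. 1)"
    using fij unfolding is_fij_def Let_def m2 bword2 by simp
  have "shiftp ?l (\<lambda>x. f (\<lambda>_. 1) x - 1) \<in> BSideal n v"
    using shift_ideal[of _ n "[j, i]" a b] f1 v2 unfolding modeq_def by simp
  then have s1: "modeq n v (shiftp ?l (f (\<lambda>_. 1))) (\<lambda>_. 1)"
    unfolding modeq_def by (simp add: shiftp_def)
  have one: "(\<lambda>_. 1) \<in> Apoly n 2" unfolding Apoly_def by (rule polys.pconst)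
  have "modeq n v (F (shiftp ?l (\<lambda>_. 1))) (shiftp ?l (f (\<lambda>_. 1)))"
    using sh one m2 by simp
  then have F1: "modeq n v (F (\<lambda>_. 1)) (\<lambda>_. 1)"
    using s1 modeq_trans by (simp add: shiftp_def)
  let ?O = "{(s, c) \<in> slots n (length u). s \<le> ?l \<or> ?l + 2 \<le> s}"
  have outer: "modeq n v (F g) g" if g: "g \<in> polys ?O" for g
  proof -
    have ga: "g \<in> polys (slots n (length v))" using polys_mono[OF g] lu lv by auto
    have o1: "(\<lambda>_. 1) \<in> Apoly n (length u)" unfolding Apoly_def by (rule polys.pconst)
    have "modeq n v (F (\<lambda>x. g x * 1)) (\<lambda>x. g x * F (\<lambda>_. 1) x)"
      using lin[unfolded m2, rule_format, OF g o1] by simp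
    moreover have "modeq n v (\<lambda>x. g x * F (\<lambda>_. 1) x) (\<lambda>x. g x * 1)"
      using modeq_mul[OF ga F1] .
    ultimately show ?thesis using modeq_trans by simp
  qed
  define \<tau> where "\<tau> = (\<lambda>v::nat \<times> nat. if fst v = Suc ?l then (if snd v = i \<or> snd v = Suc i then ?l + 2 else ?l) else fst v)"
  have cu: "cnt u (\<tau> (s, c)) c = cnt u s c" for s c
  proof (cases "s = Suc ?l")
    case True
    show ?thesis
    proof (cases "c = i \<or> c = Suc i")
      case True
      then have "\<not> (j = c \<or> Suc j = c)" using far by auto
      then show ?thesis using True \<open>s = Suc ?l\<close> unfolding \<tau>_def u2
        by (simp add: cnt_l1 cnt_l2)
    next
      case False
      then have "\<not> (i = c \<or> Suc i = c)" by auto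
      then show ?thesis using False \<open>s = Suc ?l\<close> unfolding \<tau>_def u2
        by (simp add: cnt_l1 cnt_l0)
    qed
  next
    case False
    then show ?thesis unfolding \<tau>_def by simp
  qed
  have cv: "cnt v t c = cnt u t c" if "t \<noteq> Suc ?l" for t c
  proof (cases "t \<le> ?l")
    case True
    then have t0: "t - ?l = 0" by simp
    have z: "cnt ys 0 c = 0" for ys by (simp add: cnt_def)
    show ?thesis by (simp only: u2 v2 cnt_append[of a] t0 z)
  next
    case False
    define r where "r = t - ?l - 2"
    have t2: "t - ?l = Suc (Suc r)" using that False unfolding r_def by simp
    have e: "cnt (j # i # b) (Suc (Suc r)) c = cnt (i # j # b) (Suc (Suc r)) c"
      by (simp add: cnt_def)
    have A: "cnt v t c = cnt a t c + cnt (j # i # b) (Suc (Suc r)) c"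
      by (simp only: v2 cnt_append append.simps t2)
    have B: "cnt u t c = cnt a t c + cnt (i # j # b) (Suc (Suc r)) c"
      by (simp only: u2 cnt_append append.simps t2)
    show ?thesis using A B e by simp
  qed
  have tne: "\<tau> v \<noteq> Suc ?l" for v unfolding \<tau>_def by auto
  have val: "valid n u v \<tau>"
    unfolding valid_def using cu cv tne lu lv by (auto simp: \<tau>_def)
  have canon: "modeq n v (F q) (\<lambda>x. q (sb \<tau> x))" if q: "q \<in> Apoly n (length u)" for q
  proof -
    have "(\<lambda>x. q (sb fst x) - q (sb \<tau> x)) \<in> BSideal n u"
      apply (rule subst_cong[of q "slots n (length u)"])
      using q cu lu unfolding Apoly_def by (auto simp: slots_def \<tau>_def)
    then have m: "modeq n u q (\<lambda>x. q (sb \<tau> x))" unfolding modeq_def sb_fst by simp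
    have qo: "(\<lambda>x. q (sb \<tau> x)) \<in> polys ?O"
      apply (rule polys_subst[of q "slots n (length u)"])
      using q lu unfolding Apoly_def by (auto simp: slots_def \<tau>_def)
    have qa: "(\<lambda>x. q (sb \<tau> x)) \<in> Apoly n (length u)" using polys_mono[OF qo] unfolding Apoly_def by auto
    have "modeq n v (F q) (F (\<lambda>x. q (sb \<tau> x)))"
      using bm[unfolded bimor_def, THEN conjunct2, THEN conjunct1, rule_format, OF q qa m] .
    then show ?thesis using outer[OF qo] modeq_trans by blast
  qed
  note bm' = bm[unfolded bimor_def]
  show ?thesis unfolding good_def
  proof (intro conjI)
    show "\<forall>q\<in>Apoly n (length u). F q \<in> Apoly n (length v)" using bm'[THEN conjunct1] .
    show "\<forall>p\<in>Apoly n (length u). \<forall>q\<in>Apoly n (length u). modeq n u p q \<longrightarrow> modeq n v (F p) (F q)"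
      using bm'[THEN conjunct2, THEN conjunct1] .
    show "\<forall>q\<in>Apoly n (length u). \<exists>\<tau>. valid n u v \<tau> \<and> modeq n v (F q) (\<lambda>x. q (sb \<tau> x))"
      using canon val by blast
  qed
qed


fun rpath :: "nat \<Rightarrow> (nat \<Rightarrow> nat) \<Rightarrow> word list \<Rightarrow> bool" where
  "rpath n w [] = False"
| "rpath n w [u] = True"
| "rpath n w (u # v # ps) = (rex_edge n w u v \<and> rpath n w (v # ps))"

fun adjs :: "nat \<Rightarrow> (nat \<Rightarrow> nat) \<Rightarrow> word list \<Rightarrow> word set list" where
  "adjs n w (u # v # ps) = (if adjacent_edge n w u v then [{u, v}] else []) @ adjs n w (v # ps)"
| "adjs n w _ = []"

lemma adjs_eq: "map (\<lambda>(a, b). {a, b}) (filter (\<lambda>(a, b). adjacent_edge n w a b) (zip ps (tl ps)))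
   = adjs n w ps"
  by (induction n w ps rule: adjs.induct) auto

lemma rex_path_rpath: "rex_path n w ps \<Longrightarrow> rpath n w ps"
proof (induction ps rule: induct_list012)
  case 1 then show ?case by (simp add: rex_path_def)
next
  case (2 x) then show ?case by simp
next
  case (3 u v ps)
  have e: "rex_edge n w u v" using "3.prems" unfolding rex_path_def
    by (metis length_Cons nth_Cons_0 nth_Cons_Suc zero_less_Suc Suc_less_eq)
  have "rex_path n w (v # ps)" unfolding rex_path_def
  proof (intro conjI allI impI)
    show "v # ps \<noteq> []" by simp
    show "set (v # ps) \<subseteq> Rex n w" using "3.prems" unfolding rex_path_def by auto
    fix k assume "Suc k < length (v # ps)"
    then have "Suc (Suc k) < length (u # v # ps)" by simp
    then have "rex_edge n w ((u # v # ps) ! Suc k) ((u # v # ps) ! Suc (Suc k))"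
      using "3.prems" unfolding rex_path_def by blast
    then show "rex_edge n w ((v # ps) ! k) ((v # ps) ! Suc k)" by simp
  qed
  then show ?case using e "3.IH" by simp
qed

lemma distant_not_adjacent: "distant_edge n w u v \<Longrightarrow> \<not> adjacent_edge n w u v"
  unfolding distant_edge_def adjacent_edge_def using occ_distant occ_adjacent by metis

definition related :: "nat \<Rightarrow> word \<Rightarrow> word \<Rightarrow> pf \<Rightarrow> pf \<Rightarrow> bool" where
  "related n u u' a a' \<longleftrightarrow> (\<exists>x G G' q0 q0'. good n x u G \<and> good n x u' G' \<and>
     q0 \<in> Apoly n (length x) \<and> q0' \<in> Apoly n (length x) \<and> modeq n x q0 q0' \<and> a = G q0 \<and> a' = G' q0')"

context
  fixes n :: nat and w :: "nat \<Rightarrow> nat" and Fm :: "word \<Rightarrow> word \<Rightarrow> (pf \<Rightarrow> pf)"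
  assumes EM: "\<And>u v. rex_edge n w u v \<Longrightarrow> edge_mor n u v (Fm u v)"
begin

lemma step_good:
  assumes "distant_edge n w u v" shows "good n u v (Fm u v)"
  using distant_good[OF assms EM] assms unfolding rex_edge_def by blast

lemma step_bimor:
  assumes "rex_edge n w u v" shows "bimor n u v (Fm u v)"
  using EM[OF assms] unfolding edge_mor_def by blast

lemma main_paths:
  "\<forall>ps ps' a a'. length ps + length ps' = N \<longrightarrow> rpath n w ps \<longrightarrow> rpath n w ps' \<longrightarrow>
    last ps = last ps' \<longrightarrow> adjs n w ps = adjs n w ps' \<longrightarrow>
    (\<forall>c. occ c (hd ps) = occ c (hd ps')) \<longrightarrow> related n (hd ps) (hd ps') a a' \<longrightarrow>
    modeq n (last ps) (path_mor Fm ps a) (path_mor Fm ps' a')"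
proof (induction N rule: less_induct)
  case (less N)
  show ?case
  proof (intro allI impI)
    fix ps ps' a a'
    assume len: "length ps + length ps' = N" and rp: "rpath n w ps" and rp': "rpath n w ps'"
      and la: "last ps = last ps'" and ad: "adjs n w ps = adjs n w ps'"
      and oc: "\<forall>c. occ c (hd ps) = occ c (hd ps')" and rel: "related n (hd ps) (hd ps') a a'"
    obtain x G G' q0 q0' where gG: "good n x (hd ps) G" and gG': "good n x (hd ps') G'"
      and q0: "q0 \<in> Apoly n (length x)" and q0': "q0' \<in> Apoly n (length x)"
      and mq: "modeq n x q0 q0'" and aa: "a = G q0" "a' = G' q0'"
      using rel unfolding related_def by blast
    show "modeq n (last ps) (path_mor Fm ps a) (path_mor Fm ps' a')"
    proof (cases "\<exists>u v r. ps = u # v # r \<and> distant_edge n w u v")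
      case True
      then obtain u v r where ps: "ps = u # v # r" and d: "distant_edge n w u v" by blast
      have "good n x u G" using gG ps by simp
      then have "good n x v (Fm u v \<circ> G)" using good_comp step_good[OF d] by blast
      moreover have "\<forall>c. occ c v = occ c (hd ps')"
      proof
        fix c
        have "occ c u = occ c v" using occ_distant d unfolding distant_edge_def by blast
        then show "occ c v = occ c (hd ps')" using oc ps by simp
      qed
      moreover have "rpath n w (v # r)" using rp ps by simp
      moreover have "adjs n w (v # r) = adjs n w ps'" using ad ps distant_not_adjacent[OF d] by simp
      moreover have "last (v # r) = last ps'" using la ps by simp
      moreover have "related n v (hd ps') ((Fm u v \<circ> G) q0) (G' q0')"
        unfolding related_def using calculation(1) gG' q0 q0' mq by blast
      moreover have "length (v # r) + length ps' < N" using len ps by simp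
      ultimately have "modeq n (last (v # r)) (path_mor Fm (v # r) ((Fm u v \<circ> G) q0)) (path_mor Fm ps' (G' q0'))"
        using less.IH rp' by simp
      then show ?thesis using aa ps by simp
    next
      case nd: False
      show ?thesis
      proof (cases "\<exists>u v r. ps' = u # v # r \<and> distant_edge n w u v")
        case True
        then obtain u v r where ps': "ps' = u # v # r" and d: "distant_edge n w u v" by blast
        have "good n x u G'" using gG' ps' by simp
        then have "good n x v (Fm u v \<circ> G')" using good_comp step_good[OF d] by blast
        moreover have oc2: "\<forall>c. occ c (hd ps) = occ c v"
        proof
          fix c
          have "occ c u = occ c v" using occ_distant d unfolding distant_edge_def by blast
          then show "occ c (hd ps) = occ c v" using oc ps' by simp
        qed
        moreover have r1: "rpath n w (v # r)" using rp' ps' by simp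
        moreover have r2: "adjs n w ps = adjs n w (v # r)" using ad ps' distant_not_adjacent[OF d] by simp
        moreover have r3: "last ps = last (v # r)" using la ps' by simp
        moreover have r4: "related n (hd ps) v (G q0) ((Fm u v \<circ> G') q0')"
          unfolding related_def using calculation(1) gG q0 q0' mq by blast
        moreover have lt2: "length ps + length (v # r) < N" using len ps' by simp
        ultimately have "modeq n (last ps) (path_mor Fm ps (G q0)) (path_mor Fm (v # r) ((Fm u v \<circ> G') q0'))"
          using less.IH[OF lt2, rule_format, of ps "v # r" "G q0" "(Fm u v \<circ> G') q0'", OF refl rp r1 r3 r2]
            r4 oc2 by simp
        then show ?thesis using aa ps' by simp
      next
        case nd': False
        have base: "modeq n (hd ps) (G q0) (G' q0')" if "hd ps = hd ps'"
        proof -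
          have "modeq n (hd ps) (G q0) (G q0')" using gG q0 q0' mq unfolding good_def by blast
          moreover have "modeq n (hd ps) (G q0') (G' q0')" using good_agree[OF gG] gG' that q0' by simp
          ultimately show ?thesis using aa modeq_trans by blast
        qed
        obtain u r where ps: "ps = u # r" using rp by (cases ps) auto
        obtain u' r' where ps': "ps' = u' # r'" using rp' by (cases ps') auto
        show ?thesis
        proof (cases r)
          case Nil
          show ?thesis
          proof (cases r')
            case Nil
            then show ?thesis using aa base ps ps' \<open>r = []\<close> la by simp
          next
            case (Cons v' r'')
            have "rex_edge n w u' v'" using rp' ps' Cons by simp
            then have "adjacent_edge n w u' v'" using nd' ps' Cons unfolding rex_edge_def by blast
            then show ?thesis using aa ad ps ps' Cons \<open>r = []\<close> by simp
          qed
        next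
          case (Cons v r0)
          have "rex_edge n w u v" using rp ps Cons by simp
          then have adj: "adjacent_edge n w u v" using nd ps Cons unfolding rex_edge_def by blast
          show ?thesis
          proof (cases r')
            case Nil
            then show ?thesis using aa ad ps ps' Cons adj by simp
          next
            case (Cons v' r0')
            have "rex_edge n w u' v'" using rp' ps' Cons by simp
            then have adj': "adjacent_edge n w u' v'" using nd' ps' Cons unfolding rex_edge_def by blast
            have ad2: "{u, v} = {u', v'}" and ad3: "adjs n w (v # r0) = adjs n w (v' # r0')"
              using ad ps ps' Cons \<open>r = v # r0\<close> adj adj' by auto
            have uu: "u = u' \<and> v = v'"
            proof (rule ccontr)
              assume "\<not> (u = u' \<and> v = v')"
              then have "u = v' \<and> v = u'" using ad2 by (auto simp: doubleton_eq_iff)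
              then have "\<forall>c. occ c u = occ c v" using oc ps ps' by simp
              then show False using adj occ_adjacent unfolding adjacent_edge_def by blast
            qed
            have e: "rex_edge n w u v" using adj unfolding rex_edge_def by simp
            have bm: "bimor n u v (Fm u v)" using step_bimor[OF e] .
            have Gq: "G q0 \<in> Apoly n (length u)" "G' q0' \<in> Apoly n (length u)"
              using gG gG' q0 q0' ps ps' uu unfolding good_def by auto
            have m1: "modeq n u (G q0) (G' q0')" using base ps ps' uu by simp
            have m2: "modeq n v (Fm u v (G q0)) (Fm u v (G' q0'))"
              using bm[unfolded bimor_def, THEN conjunct2, THEN conjunct1, rule_format, OF Gq m1] .
            have A: "Fm u v (G q0) \<in> Apoly n (length v)" "Fm u v (G' q0') \<in> Apoly n (length v)"
              using bm Gq unfolding bimor_def by auto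
            have rr: "rpath n w (v # r0)" "rpath n w (v # r0')"
              using rp rp' ps ps' Cons \<open>r = v # r0\<close> uu by auto
            have lt: "length (v # r0) + length (v # r0') < N" using len ps ps' Cons \<open>r = v # r0\<close> by simp
            have rl: "related n v v (Fm u v (G q0)) (Fm u v (G' q0'))"
              unfolding related_def using good_id[of n v] A m2 by (metis id_apply)
            have "modeq n (last (v # r0)) (path_mor Fm (v # r0) (Fm u v (G q0)))
                (path_mor Fm (v # r0') (Fm u v (G' q0')))"
            proof -
              have la2: "last (v # r0) = last (v # r0')" using la ps ps' Cons \<open>r = v # r0\<close> uu by simp
              show ?thesis
                using less.IH[OF lt, rule_format, of "v # r0" "v # r0'" "Fm u v (G q0)" "Fm u v (G' q0')",
                  OF refl rr la2] ad3 uu rl by simp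
            qed
            then show ?thesis using aa ps ps' Cons \<open>r = v # r0\<close> uu by simp
          qed
        qed
      qed
    qed
  qed
qed

end


theorem proposition3p2:
  fixes n :: nat and w :: "nat \<Rightarrow> nat"
    and E :: "word set \<Rightarrow> word set \<Rightarrow> word set"
    and Cs :: "word set list" and p p' :: "word list"
    and Fm :: "word \<Rightarrow> word \<Rightarrow> (pf \<Rightarrow> pf)"
  assumes "n \<ge> 2"
    and "w permutes {1..n}"
    and "rep_edges n w E"
    and "gamma_path n w Cs"
    and "\<And>u v. rex_edge n w u v \<Longrightarrow> edge_mor n u v (Fm u v)"
    and "lift n w E Cs p"
    and "lift n w E Cs p'"
  shows "\<forall>q\<in>Apoly n (length (rep (hd Cs))).
           modeq n (rep (last Cs)) (path_mor Fm p q) (path_mor Fm p' q)"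
proof
  have rp: "rpath n w p" "rpath n w p'" using assms(6,7) rex_path_rpath unfolding lift_def by blast+
  have h: "hd p = hd p'" and l: "last p = last p'" and lr: "last p = rep (last Cs)"
    and hr: "hd p = rep (hd Cs)" using assms(6,7) unfolding lift_def by auto
  have ad: "adjs n w p = adjs n w p'" using assms(6,7) unfolding lift_def adjs_eq by simp
  fix q assume q: "q \<in> Apoly n (length (rep (hd Cs)))"
  have rel: "related n (hd p) (hd p') q q" unfolding related_def
    apply (rule exI[of _ "hd p"], rule exI[of _ id], rule exI[of _ id], rule exI[of _ q], rule exI[of _ q])
    using good_id[of n "hd p"] q modeq_refl h hr by simp
  have "modeq n (last p) (path_mor Fm p q) (path_mor Fm p' q)"
    using main_paths[where w = w and n = n and Fm = Fm, OF assms(5), rule_format, where ps = p and ps' = p' and a = q and a' = q, OF _ refl rp(1) rp(2) l ad] h rel by simp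
  then show "modeq n (rep (last Cs)) (path_mor Fm p q) (path_mor Fm p' q)" using lr by simp
qed

end
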